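(* Let $n$ be a positive integer, $0\le m\le\lfloor n/2\rfloor$ and $0\le k\le m$. Let $M^{(n-m,m)}$ be the complex vector space with basis $\{e_\sigma\}$ indexed by the $m$-element subsets $\sigma$ of $\{1,\dots,n\}$, let $b_0,\dots,b_m$ be complex numbers and let $B_{(n-m,m)}$ be the matrix (in the basis $\{e_\sigma\}$) whose $(\sigma,\tau)$ entry is $b_{\#(\sigma\cap\tau)}$. Let $\Omega=\{n-m+1,\dots,n\}$ and define the linear map $\pi:\mathbb{C}[S_n]\to M^{(n-m,m)}$ by $\pi(g)=e_{g(\Omega)}$ for $g\in S_n$. Let $T_k$ be the Young tableau of shape $(n-k,k)$ whose first row contains $1,\dots,n-k$ and whose second row contains $n-k+1,\dots,n$, with row subgroup $R(T_k)$ and column subgroup $C(T_k)$, and let $c_k=\big(\sum_{q\in C(T_k)}\operatorname{sgn}(q)q\big)\big(\sum_{p\in R(T_k)}p\big)\in\mathbb{C}[S_n]$. Then the coefficient of $e_\Omega$ in $B_{(n-m,m)}\pi(c_k)$ is $$\sum_{v=0}^{k}\sum_{w=0}^{m-k}(-1)^v\binom{k}{v}\binom{m-k}{w}\binom{n-m-v}{w}w!\binom{m-k+v}{m-k-w}(m-k-w)!\,k!\,(n-m)!\;b_{m-v-w}.$$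
   Context: $\#X$ denotes the cardinality of a finite set $X$. The row subgroup $R(T_k)$ (resp. column subgroup $C(T_k)$) consists of the permutations of $\{1,\dots,n\}$ preserving each row (resp. each column) of $T_k$ as a set. Products in the group ring are composition of permutations, $qp=q\circ p$. *)

theory Defs
  imports "HOL-Combinatorics.Permutations" Complex_Main
begin

definition Sn :: "nat \<Rightarrow> (nat \<Rightarrow> nat) set" where
  "Sn n = {p. p permutes {1..n}}"

text \<open>Elements of the group ring C[S_n]: coefficient functions (supported on Sn n).
  Product: (x*y)(g) = sum over a,b in S_n with a o b = g of x(a) y(b).\<close>
definition gr_mult :: "nat \<Rightarrow> ((nat \<Rightarrow> nat) \<Rightarrow> complex) \<Rightarrow> ((nat \<Rightarrow> nat) \<Rightarrow> complex)
    \<Rightarrow> ((nat \<Rightarrow> nat) \<Rightarrow> complex)" where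
  "gr_mult n x y = (\<lambda>g. \<Sum>a\<in>Sn n. \<Sum>b\<in>Sn n. if a \<circ> b = g then x a * y b else 0)"

definition tab_row :: "nat \<Rightarrow> nat \<Rightarrow> nat \<Rightarrow> nat set" where
  "tab_row n k i = (if i = 1 then {1..n-k} else if i = 2 then {n-k+1..n} else {})"

definition tab_col :: "nat \<Rightarrow> nat \<Rightarrow> nat \<Rightarrow> nat set" where
  "tab_col n k j = (if 1 \<le> j \<and> j \<le> n - k then {j} \<union> (if j \<le> k then {n-k+j} else {}) else {})"

definition row_group :: "nat \<Rightarrow> nat \<Rightarrow> (nat \<Rightarrow> nat) set" where
  "row_group n k = {p \<in> Sn n. \<forall>i. p ` tab_row n k i = tab_row n k i}"

definition col_group :: "nat \<Rightarrow> nat \<Rightarrow> (nat \<Rightarrow> nat) set" where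
  "col_group n k = {p \<in> Sn n. \<forall>j. p ` tab_col n k j = tab_col n k j}"

definition young_c :: "nat \<Rightarrow> nat \<Rightarrow> ((nat \<Rightarrow> nat) \<Rightarrow> complex)" where
  "young_c n k = gr_mult n
     (\<lambda>q. if q \<in> col_group n k then of_int (sign q) else 0)
     (\<lambda>p. if p \<in> row_group n k then 1 else 0)"

definition msubsets :: "nat \<Rightarrow> nat \<Rightarrow> nat set set" where
  "msubsets n m = {s. s \<subseteq> {1..n} \<and> card s = m}"

definition Omega :: "nat \<Rightarrow> nat \<Rightarrow> nat set" where
  "Omega n m = {n-m+1..n}"

definition pi_map :: "nat \<Rightarrow> nat \<Rightarrow> ((nat \<Rightarrow> nat) \<Rightarrow> complex) \<Rightarrow> (nat set \<Rightarrow> complex)" where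
  "pi_map n m x = (\<lambda>\<sigma>. \<Sum>g\<in>{g \<in> Sn n. g ` Omega n m = \<sigma>}. x g)"

definition B_apply :: "nat \<Rightarrow> nat \<Rightarrow> (nat \<Rightarrow> complex) \<Rightarrow> (nat set \<Rightarrow> complex) \<Rightarrow> (nat set \<Rightarrow> complex)" where
  "B_apply n m b v = (\<lambda>\<sigma>. \<Sum>\<tau>\<in>msubsets n m. b (card (\<sigma> \<inter> \<tau>)) * v \<tau>)"

end

theory Submission
  imports Defs
begin

lemma exists_perm_image:
  assumes "finite U" "D \<subseteq> U" "A \<subseteq> U" "card A = card D"
  shows "\<exists>r. r permutes U \<and> r ` D = A"
proof -
  have fD: "finite D" "finite A" using assms finite_subset by auto
  obtain g where g: "bij_betw g D A" using finite_same_card_bij[OF fD(1) fD(2)] assms(4) by metis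
  have "card (U - D) = card (U - A)" using assms fD by (simp add: card_Diff_subset)
  then obtain h where h: "bij_betw h (U - D) (U - A)"
    using finite_same_card_bij[of "U-D" "U-A"] assms(1) by auto
  define r where "r x = (if x \<in> D then g x else if x \<in> U then h x else x)" for x
  have 1: "bij_betw r D A" using g by (subst bij_betw_cong[where g=g]) (auto simp: r_def)
  have 2: "bij_betw r (U - D) (U - A)" using h by (subst bij_betw_cong[where g=h]) (auto simp: r_def)
  have "bij_betw r (D \<union> (U - D)) (A \<union> (U - A))" by (rule bij_betw_combine[OF 1 2]) auto
  moreover have "D \<union> (U - D) = U" "A \<union> (U - A) = U" using assms by auto
  ultimately have "bij_betw r U U" by simp
  hence "r permutes U" by (rule bij_imp_permutes) (use assms(2) in \<open>auto simp: r_def\<close>)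
  moreover have "r ` D = A" using 1 by (simp add: bij_betw_def)
  ultimately show ?thesis by blast
qed

lemma sum_perm_image:
  fixes F :: "'a set \<Rightarrow> 'b::comm_ring_1"
  assumes U: "finite U" and D: "D \<subseteq> U"
  shows "(\<Sum>p\<in>{p. p permutes U}. F (p ` D)) =
     of_nat (fact (card D) * fact (card U - card D)) * (\<Sum>A\<in>{A. A \<subseteq> U \<and> card A = card D}. F A)"
proof -
  define P where "P = {p. p permutes U}"
  define Bn where "Bn = {A. A \<subseteq> U \<and> card A = card D}"
  define fib where "fib A = {p \<in> P. p ` D = A}" for A
  have fP: "finite P" unfolding P_def using U by (rule finite_permutations)
  have fB: "finite Bn" unfolding Bn_def using U by auto
  have fD: "finite D" using U D finite_subset by auto
  have img: "(\<lambda>p. p ` D) ` P \<subseteq> Bn"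
  proof
    fix A assume "A \<in> (\<lambda>p. p ` D) ` P"
    then obtain p where p: "p permutes U" "A = p ` D" by (auto simp: P_def)
    have "p ` D \<subseteq> U" using permutes_image[OF p(1)] D by auto
    moreover have "card (p ` D) = card D"
      using card_image permutes_inj[OF p(1)] by (metis inj_on_subset subset_UNIV)
    ultimately show "A \<in> Bn" using p by (auto simp: Bn_def)
  qed
  have cst: "card (fib A) = card (fib D)" if A: "A \<in> Bn" for A
  proof -
    obtain r where r: "r permutes U" "r ` D = A"
      using exists_perm_image[OF U D, of A] A by (auto simp: Bn_def)
    have "bij_betw (\<lambda>p. r \<circ> p) (fib D) (fib A)"
    proof (rule bij_betw_byWitness[where f'="\<lambda>p. inv r \<circ> p"])
      show "\<forall>a\<in>fib D. inv r \<circ> (r \<circ> a) = a"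
        using permutes_inv_o(2)[OF r(1)] by (simp add: comp_assoc[symmetric])
      show "\<forall>a\<in>fib A. r \<circ> (inv r \<circ> a) = a"
        using permutes_inv_o(1)[OF r(1)] by (simp add: comp_assoc[symmetric])
      show "(\<circ>) r ` fib D \<subseteq> fib A"
      proof
        fix x assume "x \<in> (\<circ>) r ` fib D"
        then obtain p where p: "p \<in> P" "p ` D = D" "x = r \<circ> p" by (auto simp: fib_def)
        have "x permutes U" using p r by (auto simp: P_def intro: permutes_compose)
        moreover have "x ` D = A" using p r by (metis image_comp)
        ultimately show "x \<in> fib A" by (auto simp: fib_def P_def)
      qed
      show "(\<lambda>p. inv r \<circ> p) ` fib A \<subseteq> fib D"
      proof
        fix x assume "x \<in> (\<lambda>p. inv r \<circ> p) ` fib A"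
        then obtain p where p: "p \<in> P" "p ` D = A" "x = inv r \<circ> p" by (auto simp: fib_def)
        have "p permutes U" using p by (simp add: P_def)
        hence "x permutes U" using p(3) permutes_inv[OF r(1)] permutes_compose by blast
        moreover have "x ` D = inv r ` (r ` D)" using p r by (metis image_comp)
        hence "x ` D = D" using image_inv_f_f[OF permutes_inj[OF r(1)]] by simp
        ultimately show "x \<in> fib D" by (auto simp: fib_def P_def)
      qed
    qed
    thus ?thesis by (rule bij_betw_same_card[symmetric])
  qed
  have "(\<Sum>p\<in>P. F (p ` D)) = (\<Sum>A\<in>Bn. \<Sum>p\<in>fib A. F (p ` D))"
    unfolding fib_def by (rule sum.group[OF fP fB img, symmetric])
  also have "\<dots> = (\<Sum>A\<in>Bn. of_nat (card (fib D)) * F A)"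
  proof (rule sum.cong[OF refl])
    fix A assume "A \<in> Bn"
    have "(\<Sum>p\<in>fib A. F (p ` D)) = (\<Sum>p\<in>fib A. F A)" by (rule sum.cong) (auto simp: fib_def)
    also have "\<dots> = of_nat (card (fib D)) * F A" using cst[OF \<open>A \<in> Bn\<close>] by simp
    finally show "(\<Sum>p\<in>fib A. F (p ` D)) = of_nat (card (fib D)) * F A" .
  qed
  finally have s1: "(\<Sum>p\<in>P. F (p ` D)) = of_nat (card (fib D)) * (\<Sum>A\<in>Bn. F A)"
    by (simp add: sum_distrib_left)
  have "card P = (\<Sum>A\<in>Bn. card (fib A))"
    unfolding fib_def using sum.group[OF fP fB img, of "\<lambda>_. 1::nat"] by simp
  also have "\<dots> = card Bn * card (fib D)" using cst by simp
  finally have "fact (card U) = (card U choose card D) * card (fib D)"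
    using card_permutations[OF refl U] n_subsets[OF U] by (simp add: P_def Bn_def)
  moreover have "card D \<le> card U" using U D card_mono by auto
  ultimately have "(card U choose card D) * card (fib D) = (card U choose card D) * (fact (card D) * fact (card U - card D))"
    using binomial_fact_lemma[of "card D" "card U"] by (simp add: ac_simps)
  moreover have "(card U choose card D) > 0" using \<open>card D \<le> card U\<close> by simp
  ultimately have "card (fib D) = fact (card D) * fact (card U - card D)" by simp
  thus ?thesis using s1 by (simp add: P_def Bn_def)
qed

lemma sum_pow_card:
  fixes h :: "nat \<Rightarrow> 'b::comm_ring_1"
  assumes K: "finite K"
  shows "(\<Sum>S\<in>Pow K. h (card S)) = (\<Sum>v=0..card K. of_nat (card K choose v) * h v)"
proof -
  have img: "card ` Pow K \<subseteq> {0..card K}" using K by (auto intro: card_mono)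
  have "(\<Sum>S\<in>Pow K. h (card S)) = (\<Sum>v=0..card K. \<Sum>S\<in>{S \<in> Pow K. card S = v}. h (card S))"
    by (rule sum.group[OF _ _ img, symmetric]) (use K in auto)
  also have "\<dots> = (\<Sum>v=0..card K. of_nat (card K choose v) * h v)"
  proof (rule sum.cong[OF refl])
    fix v assume "v \<in> {0..card K}"
    have "(\<Sum>S\<in>{S \<in> Pow K. card S = v}. h (card S)) = (\<Sum>S\<in>{S \<in> Pow K. card S = v}. h v)"
      by (rule sum.cong) auto
    also have "\<dots> = of_nat (card {S \<in> Pow K. card S = v}) * h v" by simp
    also have "{S \<in> Pow K. card S = v} = {S. S \<subseteq> K \<and> card S = v}" by auto
    finally show "(\<Sum>S\<in>{S \<in> Pow K. card S = v}. h (card S)) = of_nat (card K choose v) * h v"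
      using n_subsets[OF K, of v] by simp
  qed
  finally show ?thesis .
qed

lemma sum_subsets_inter:
  fixes g :: "nat \<Rightarrow> 'b::comm_ring_1"
  assumes U: "finite U" and X: "X \<subseteq> U"
  shows "(\<Sum>A\<in>{A. A \<subseteq> U \<and> card A = a}. g (card (A \<inter> X))) =
    (\<Sum>i=0..a. of_nat ((card X choose i) * ((card U - card X) choose (a - i))) * g i)"
proof -
  define Bn where "Bn = {A. A \<subseteq> U \<and> card A = a}"
  have fX: "finite X" using U X finite_subset by auto
  have fB: "finite Bn" unfolding Bn_def using U by auto
  have img: "(\<lambda>A. card (A \<inter> X)) ` Bn \<subseteq> {0..a}"
  proof
    fix i assume "i \<in> (\<lambda>A. card (A \<inter> X)) ` Bn"
    then obtain A where A: "A \<subseteq> U" "card A = a" "i = card (A \<inter> X)" by (auto simp: Bn_def)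
    have "finite A" using A U finite_subset by auto
    hence "card (A \<inter> X) \<le> card A" by (intro card_mono) auto
    thus "i \<in> {0..a}" using A by simp
  qed
  have cnt: "card {A \<in> Bn. card (A \<inter> X) = i} = (card X choose i) * ((card U - card X) choose (a - i))"
    if i: "i \<le> a" for i
  proof -
    define P1 where "P1 = {B. B \<subseteq> X \<and> card B = i}"
    define P2 where "P2 = {C. C \<subseteq> U - X \<and> card C = a - i}"
    have "bij_betw (\<lambda>(B,C). B \<union> C) (P1 \<times> P2) {A \<in> Bn. card (A \<inter> X) = i}"
    proof (rule bij_betw_byWitness[where f'="\<lambda>A. (A \<inter> X, A - X)"])
      show "\<forall>a\<in>P1 \<times> P2. ((case a of (B, C) \<Rightarrow> B \<union> C) \<inter> X, (case a of (B, C) \<Rightarrow> B \<union> C) - X) = a"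
        by (auto simp: P1_def P2_def)
      show "\<forall>a'\<in>{A \<in> Bn. card (A \<inter> X) = i}. (case (a' \<inter> X, a' - X) of (B, C) \<Rightarrow> B \<union> C) = a'"
        by auto
      show "(\<lambda>(B, C). B \<union> C) ` (P1 \<times> P2) \<subseteq> {A \<in> Bn. card (A \<inter> X) = i}"
      proof (rule subsetI)
        fix y assume "y \<in> (\<lambda>(B, C). B \<union> C) ` (P1 \<times> P2)"
        then obtain B C where y: "y = B \<union> C" and B: "B \<in> P1" and C: "C \<in> P2" by auto
        have fBC: "finite B" "finite C" using B C fX U finite_subset by (auto simp: P1_def P2_def)
        have "B \<inter> C = {}" using B C by (auto simp: P1_def P2_def)
        hence "card (B \<union> C) = a" using card_Un_disjoint[OF fBC] B C i by (auto simp: P1_def P2_def)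
        moreover have "(B \<union> C) \<inter> X = B" using B C by (auto simp: P1_def P2_def)
        moreover have "B \<union> C \<subseteq> U" using B C X by (auto simp: P1_def P2_def)
        ultimately show "y \<in> {A \<in> Bn. card (A \<inter> X) = i}" unfolding y Bn_def using B by (simp add: P1_def)
      qed
      show "(\<lambda>A. (A \<inter> X, A - X)) ` {A \<in> Bn. card (A \<inter> X) = i} \<subseteq> P1 \<times> P2"
      proof (rule subsetI)
        fix y assume "y \<in> (\<lambda>A. (A \<inter> X, A - X)) ` {A \<in> Bn. card (A \<inter> X) = i}"
        then obtain A where y: "y = (A \<inter> X, A - X)" and A: "A \<in> Bn" "i = card (A \<inter> X)" by auto
        have fA: "finite (A \<inter> X)" "finite (A - X)" using A U finite_subset by (auto simp: Bn_def)
        have "card ((A \<inter> X) \<union> (A - X)) = card (A \<inter> X) + card (A - X)"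
          by (rule card_Un_disjoint[OF fA]) blast
        moreover have "(A \<inter> X) \<union> (A - X) = A" by blast
        ultimately have "card A = card (A \<inter> X) + card (A - X)" by simp
        thus "y \<in> P1 \<times> P2" using A y by (auto simp: P1_def P2_def Bn_def)
      qed
    qed
    hence "card {A \<in> Bn. card (A \<inter> X) = i} = card (P1 \<times> P2)" by (simp add: bij_betw_same_card)
    also have "\<dots> = card P1 * card P2" by (rule card_cartesian_product)
    also have "card P1 = card X choose i" unfolding P1_def by (rule n_subsets[OF fX])
    also have "card P2 = card (U - X) choose (a - i)" unfolding P2_def by (rule n_subsets) (use U in auto)
    also have "card (U - X) = card U - card X" using X fX by (simp add: card_Diff_subset)
    finally show ?thesis .
  qed
  have "(\<Sum>A\<in>Bn. g (card (A \<inter> X))) = (\<Sum>i=0..a. \<Sum>A\<in>{A \<in> Bn. card (A \<inter> X) = i}. g (card (A \<inter> X)))"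
    by (rule sum.group[OF fB _ img, symmetric]) simp
  also have "\<dots> = (\<Sum>i=0..a. of_nat ((card X choose i) * ((card U - card X) choose (a - i))) * g i)"
  proof (rule sum.cong[OF refl])
    fix i assume "i \<in> {0..a}"
    have "(\<Sum>A\<in>{A \<in> Bn. card (A \<inter> X) = i}. g (card (A \<inter> X))) = (\<Sum>A\<in>{A \<in> Bn. card (A \<inter> X) = i}. g i)"
      by (rule sum.cong) auto
    also have "\<dots> = of_nat (card {A \<in> Bn. card (A \<inter> X) = i}) * g i" by simp
    finally show "(\<Sum>A\<in>{A \<in> Bn. card (A \<inter> X) = i}. g (card (A \<inter> X))) =
      of_nat ((card X choose i) * ((card U - card X) choose (a - i))) * g i"
      using cnt[of i] \<open>i \<in> {0..a}\<close> by simp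
  qed
  finally show ?thesis unfolding Bn_def .
qed

definition qS :: "nat \<Rightarrow> nat set \<Rightarrow> nat \<Rightarrow> nat" where
  "qS N S x = (if x \<in> S then x + N else if N < x \<and> x - N \<in> S then x - N else x)"

lemma qS_empty: "qS N {} = id" by (auto simp: qS_def)

lemma qS_insert:
  assumes "insert j S \<subseteq> {1..N}" "j \<notin> S"
  shows "qS N (insert j S) = Transposition.transpose j (j + N) \<circ> qS N S"
proof
  fix x
  have jN: "j \<le> N" "1 \<le> j" using assms by auto
  show "qS N (insert j S) x = (Transposition.transpose j (j + N) \<circ> qS N S) x"
    using assms jN by (auto simp: qS_def Transposition.transpose_def)
qed

lemma qS_props:
  assumes "S \<subseteq> {1..k}" "2 * k \<le> n"
  shows "qS (n - k) S permutes {1..n} \<and> sign (qS (n - k) S) = (-1) ^ card S \<and>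
     (\<forall>j. qS (n - k) S ` tab_col n k j = tab_col n k j)"
proof -
  have "finite S" using assms finite_subset by blast
  thus ?thesis using assms(1)
  proof (induction S rule: finite_induct)
    case empty
    then show ?case using permutes_id[of "{1..n}"] by (simp add: qS_empty id_def)
  next
    case (insert j S)
    have j: "1 \<le> j" "j \<le> k" using insert by auto
    have eq: "qS (n - k) (insert j S) = Transposition.transpose j (j + (n - k)) \<circ> qS (n - k) S"
      by (rule qS_insert) (use insert assms in force)+
    have IH: "qS (n - k) S permutes {1..n}" "sign (qS (n - k) S) = (-1) ^ card S"
       "\<forall>j. qS (n - k) S ` tab_col n k j = tab_col n k j" using insert by auto
    have tp: "Transposition.transpose j (j + (n - k)) permutes {1..n}"
      by (rule permutes_swap_id) (use j assms in auto)
    have tc: "Transposition.transpose j (j + (n - k)) ` tab_col n k i = tab_col n k i" for i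
    proof (cases "1 \<le> i \<and> i \<le> n - k")
      case True
      show ?thesis
      proof (cases "i = j")
        case True
        then show ?thesis using j assms by (auto simp: tab_col_def Transposition.transpose_def)
      next
        case False
        have "Transposition.transpose j (j + (n - k)) x = x" if "x \<in> tab_col n k i" for x
          using that False True j assms by (auto simp: tab_col_def Transposition.transpose_def split: if_splits)
        thus ?thesis by (metis (no_types, lifting) image_cong image_ident)
      qed
    next
      case False
      then show ?thesis unfolding tab_col_def by auto
    qed
    have pp: "permutation (Transposition.transpose j (j + (n - k)))" by (rule permutation_swap_id)
    have pq: "permutation (qS (n - k) S)" using IH(1) permutation_permutes by blast
    have "sign (qS (n - k) (insert j S)) = - ((-1) ^ card S)"
    proof -
      have "j \<noteq> j + (n - k)" using j assms by auto
      hence "sign (Transposition.transpose j (j + (n - k))) = -1" by (simp add: sign_swap_id)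
      thus ?thesis unfolding eq using sign_compose[OF pp pq] IH(2) by simp
    qed
    moreover have "card (insert j S) = Suc (card S)" using insert by simp
    moreover have "qS (n - k) (insert j S) permutes {1..n}" unfolding eq using tp IH(1) permutes_compose by blast
    moreover have "qS (n - k) (insert j S) ` tab_col n k i = tab_col n k i" for i
      unfolding eq using tc[of i] IH(3) by (metis image_comp)
    ultimately show ?case by simp
  qed
qed

lemma qS_apply_small: "S \<subseteq> {1..k} \<Longrightarrow> k \<le> N \<Longrightarrow> j \<le> N \<Longrightarrow> qS N S j = (if j \<in> S then j + N else j)"
  by (auto simp: qS_def)

lemma col_group_classify:
  assumes q: "q \<in> col_group n k" and kn: "2 * k \<le> n"
  shows "q = qS (n - k) {j \<in> {1..k}. q j \<noteq> j}"
proof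
  fix x
  define N where "N = n - k"
  define S where "S = {j \<in> {1..k}. q j \<noteq> j}"
  have qp: "q permutes {1..n}" and qc: "\<And>j. q ` tab_col n k j = tab_col n k j"
    using q by (auto simp: col_group_def Sn_def)
  have inj: "inj q" using qp permutes_inj by blast
  have kN: "k \<le> N" using kn by (simp add: N_def)
  have col_small: "tab_col n k j = {j, j + N}" if "1 \<le> j" "j \<le> k" for j
    using that kN by (auto simp: tab_col_def N_def)
  have col_big: "tab_col n k j = {j}" if "k < j" "j \<le> N" for j
    using that by (auto simp: tab_col_def N_def)
  show "q x = qS (n - k) S x"
  proof (cases "x \<in> {1..n}")
    case False
    hence "q x = x" using qp by (simp add: permutes_def)
    moreover have "qS N S x = x" using False kN by (auto simp: qS_def S_def N_def)
    ultimately show ?thesis by (simp add: N_def)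
  next
    case xin: True
    show ?thesis
    proof (cases "x \<le> N")
      case True
      show ?thesis
      proof (cases "x \<le> k")
        case True
        have "q ` {x, x + N} = {x, x + N}" using qc[of x] col_small[of x] True xin by auto
        hence "q x \<in> {x, x + N}" by blast
        moreover have "qS N S x = (if x \<in> S then x + N else x)"
          using \<open>x \<le> N\<close> kN by (auto simp: qS_def S_def)
        ultimately show ?thesis using True xin by (auto simp: S_def N_def)
      next
        case False
        have "q ` {x} = {x}" using qc[of x] col_big[of x] False \<open>x \<le> N\<close> by auto
        hence "q x = x" by simp
        moreover have "qS N S x = x" using \<open>x \<le> N\<close> False kN by (auto simp: qS_def S_def)
        ultimately show ?thesis by (simp add: N_def)
      qed
    next
      case False
      define j where "j = x - N"
      have j: "1 \<le> j" "j \<le> k" "x = j + N" using False xin by (auto simp: j_def N_def)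
      have "q ` {j, x} = {j, x}" using qc[of j] col_small[of j] j by auto
      hence qj: "q j \<in> {j, x}" and qx: "q x \<in> {j, x}" by blast+
      have jx: "j \<noteq> x" using j kN by simp
      have "qS N S x = (if j \<in> S then j else x)"
        using j kN by (auto simp: qS_def S_def)
      moreover have "j \<in> S \<longleftrightarrow> q j = x" using qj j jx by (auto simp: S_def)
      ultimately have e: "qS N S x = (if q j = x then j else x)" by simp
      show ?thesis
      proof (cases "q j = x")
        case True
        hence "q x \<noteq> x" using jx inj[THEN injD] by metis
        hence "q x = j" using qx by blast
        thus ?thesis using e True by (simp add: N_def)
      next
        case False
        hence "q j = j" using qj by blast
        hence "q x \<noteq> j" using jx inj[THEN injD] by metis
        hence "q x = x" using qx by blast
        thus ?thesis using e False by (simp add: N_def)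
      qed
    qed
  qed
qed

lemma col_group_bij:
  assumes kn: "2 * k \<le> n"
  shows "bij_betw (qS (n - k)) (Pow {1..k}) (col_group n k)"
proof (rule bij_betw_byWitness[where f'="\<lambda>q. {j \<in> {1..k}. q j \<noteq> j}"])
  show "\<forall>S\<in>Pow {1..k}. {j \<in> {1..k}. qS (n - k) S j \<noteq> j} = S"
    using kn by (auto simp: qS_def)
  show "\<forall>q\<in>col_group n k. qS (n - k) {j \<in> {1..k}. q j \<noteq> j} = q"
    using col_group_classify kn by metis
  show "qS (n - k) ` Pow {1..k} \<subseteq> col_group n k"
    using qS_props[OF _ kn] by (auto simp: col_group_def Sn_def)
  show "(\<lambda>q. {j \<in> {1..k}. q j \<noteq> j}) ` col_group n k \<subseteq> Pow {1..k}" by auto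
qed

lemma qS_invol:
  assumes "S \<subseteq> {1..k}" "k \<le> N"
  shows "qS N S (qS N S x) = x"
  using assms by (auto simp: qS_def)

lemma qS_Omega:
  assumes S: "S \<subseteq> {1..k}" and km: "k \<le> m" and mn: "2 * m \<le> n"
  shows "qS (n - k) S ` {n-m+1..n} = {n-m+1..n-k} \<union> S \<union> ({n-k+1..n} - (\<lambda>j. j + (n - k)) ` S)"
proof -
  have k: "k \<le> n - m" "n - m \<le> n - k" using km mn by auto
  show ?thesis
  proof (rule set_eqI)
    fix y
    show "y \<in> qS (n - k) S ` {n-m+1..n} \<longleftrightarrow> y \<in> {n-m+1..n-k} \<union> S \<union> ({n-k+1..n} - (\<lambda>j. j + (n - k)) ` S)"
    proof
      assume "y \<in> qS (n - k) S ` {n-m+1..n}"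
      then obtain x where x: "x \<in> {n-m+1..n}" "y = qS (n - k) S x" by blast
      show "y \<in> {n-m+1..n-k} \<union> S \<union> ({n-k+1..n} - (\<lambda>j. j + (n - k)) ` S)"
        using x S k by (auto simp: qS_def)
    next
      assume y: "y \<in> {n-m+1..n-k} \<union> S \<union> ({n-k+1..n} - (\<lambda>j. j + (n - k)) ` S)"
      have Sb: "\<And>z. z \<in> S \<Longrightarrow> 1 \<le> z \<and> z \<le> k" using S by auto
      have "qS (n - k) S y \<in> {n-m+1..n}"
      proof (cases "y \<in> S")
        case True
        then show ?thesis using Sb[OF True] k km mn by (simp add: qS_def) arith
      next
        case False
        show ?thesis
        proof (cases "y \<in> {n-m+1..n-k}")
          case True
          then show ?thesis using False k by (auto simp: qS_def)
        next
          case False2: False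
          hence y2: "y \<in> {n-k+1..n}" "y \<notin> (\<lambda>j. j + (n - k)) ` S" using y False by auto
          have "y - (n - k) \<notin> S"
          proof
            assume "y - (n - k) \<in> S"
            hence "y - (n - k) + (n - k) \<in> (\<lambda>j. j + (n - k)) ` S" by blast
            thus False using y2 by simp
          qed
          thus ?thesis using False y2 k by (simp add: qS_def)
        qed
      qed
      moreover have "qS (n - k) S (qS (n - k) S y) = y" by (rule qS_invol[OF S]) (use k in auto)
      ultimately show "y \<in> qS (n - k) S ` {n-m+1..n}" by (metis imageI)
    qed
  qed
qed

lemma permutes_fix_image:
  assumes "p permutes S" "X \<inter> S = {}" shows "p ` X = X"
proof -
  have "p ` X = id ` X"
  proof (rule image_cong[OF refl])
    fix x assume "x \<in> X"
    hence "x \<notin> S" using assms(2) by blast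
    thus "p x = id x" using permutes_not_in[OF assms(1)] by simp
  qed
  thus ?thesis by simp
qed

lemma restrict_permutes:
  assumes "p permutes U" "p ` V = V" "V \<subseteq> U" "finite U"
  shows "(\<lambda>x. if x \<in> V then p x else x) permutes V"
proof (rule bij_imp_permutes)
  have "inj_on p V" using permutes_inj[OF assms(1)] by (rule inj_on_subset) simp
  hence b: "bij_betw p V V" using assms(2) by (simp add: bij_betw_def)
  have "bij_betw (\<lambda>x. if x \<in> V then p x else x) V V = bij_betw p V V"
    by (rule bij_betw_cong) simp
  thus "bij_betw (\<lambda>x. if x \<in> V then p x else x) V V" using b by simp
next
  fix x assume "x \<notin> V" thus "(if x \<in> V then p x else x) = x" by simp
qed

lemma row_sum:
  fixes F :: "nat set \<Rightarrow> complex"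
  assumes km: "k \<le> m" and mn: "m \<le> n"
  shows "(\<Sum>p\<in>row_group n k. F (p ` {n-m+1..n})) =
     of_nat (fact k) * (\<Sum>p1\<in>{p. p permutes {1..n-k}}. F (p1 ` {n-m+1..n-k} \<union> {n-k+1..n}))"
proof -
  define R1 where "R1 = {1..n-k}"
  define R2 where "R2 = {n-k+1..n}"
  define P1 where "P1 = {p. p permutes R1}"
  define P2 where "P2 = {p. p permutes R2}"
  have rows: "tab_row n k 1 = R1" "tab_row n k 2 = R2" "\<And>i. i \<noteq> 1 \<Longrightarrow> i \<noteq> 2 \<Longrightarrow> tab_row n k i = {}"
    by (auto simp: tab_row_def R1_def R2_def)
  have disj: "R1 \<inter> R2 = {}" by (auto simp: R1_def R2_def)
  have un: "R1 \<union> R2 = {1..n}" using km mn by (auto simp: R1_def R2_def)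
  have R: "row_group n k = {p. p permutes {1..n} \<and> p ` R1 = R1 \<and> p ` R2 = R2}"
  proof -
    have "(\<forall>i. p ` tab_row n k i = tab_row n k i) \<longleftrightarrow> p ` R1 = R1 \<and> p ` R2 = R2" for p
      using rows by (metis image_empty)
    thus ?thesis by (auto simp: row_group_def Sn_def)
  qed
  have bij: "bij_betw (\<lambda>(p1,p2). p1 \<circ> p2) (P1 \<times> P2) (row_group n k)"
  proof (rule bij_betw_byWitness[where f'="\<lambda>p. (\<lambda>x. if x \<in> R1 then p x else x, \<lambda>x. if x \<in> R2 then p x else x)"])
    show "\<forall>a\<in>P1 \<times> P2. (\<lambda>p. (\<lambda>x. if x \<in> R1 then p x else x, \<lambda>x. if x \<in> R2 then p x else x)) (case a of (p1, p2) \<Rightarrow> p1 \<circ> p2) = a"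
    proof
      fix a assume "a \<in> P1 \<times> P2"
      then obtain p1 p2 where a: "a = (p1, p2)" and p: "p1 \<in> P1" "p2 \<in> P2" by blast
      have p1: "p1 permutes R1" and p2: "p2 permutes R2" using p by (auto simp: P1_def P2_def)
      have e1: "(\<lambda>x. if x \<in> R1 then (p1 \<circ> p2) x else x) = p1"
      proof
        fix x show "(if x \<in> R1 then (p1 \<circ> p2) x else x) = p1 x"
        proof (cases "x \<in> R1")
          case True
          hence "x \<notin> R2" using disj by blast
          thus ?thesis using True p2 by (simp add: permutes_not_in)
        next
          case False thus ?thesis using p1 by (simp add: permutes_not_in)
        qed
      qed
      have e2: "(\<lambda>x. if x \<in> R2 then (p1 \<circ> p2) x else x) = p2"
      proof
        fix x show "(if x \<in> R2 then (p1 \<circ> p2) x else x) = p2 x"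
        proof (cases "x \<in> R2")
          case True
          hence "p2 x \<in> R2" using permutes_image[OF p2] by blast
          hence "p2 x \<notin> R1" using disj by blast
          thus ?thesis using True p1 by (simp add: permutes_not_in)
        next
          case False thus ?thesis using p2 by (simp add: permutes_not_in)
        qed
      qed
      have ca: "(case a of (p1, p2) \<Rightarrow> p1 \<circ> p2) = p1 \<circ> p2" by (simp add: a)
      show "(\<lambda>p. (\<lambda>x. if x \<in> R1 then p x else x, \<lambda>x. if x \<in> R2 then p x else x)) (case a of (p1, p2) \<Rightarrow> p1 \<circ> p2) = a"
        unfolding ca using e1 e2 a by (simp only: prod.inject)
    qed
    show "\<forall>p\<in>row_group n k. (case (\<lambda>x. if x \<in> R1 then p x else x, \<lambda>x. if x \<in> R2 then p x else x) of (p1, p2) \<Rightarrow> p1 \<circ> p2) = p"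
    proof
      fix p assume "p \<in> row_group n k"
      hence p: "p permutes {1..n}" "p ` R1 = R1" "p ` R2 = R2" using R by auto
      show "(case (\<lambda>x. if x \<in> R1 then p x else x, \<lambda>x. if x \<in> R2 then p x else x) of (p1, p2) \<Rightarrow> p1 \<circ> p2) = p"
      proof
        fix x
        show "(case (\<lambda>x. if x \<in> R1 then p x else x, \<lambda>x. if x \<in> R2 then p x else x) of (p1, p2) \<Rightarrow> p1 \<circ> p2) x = p x"
        proof (cases "x \<in> R2")
          case True
          hence "p x \<in> R2" using p(3) by blast
          hence "p x \<notin> R1" using disj by blast
          thus ?thesis using True disj by auto
        next
          case False
          show ?thesis
          proof (cases "x \<in> R1")
            case True thus ?thesis using False by auto
          next
            case False2: False
            hence "x \<notin> {1..n}" using False un by blast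
            thus ?thesis using False False2 p(1) by (simp add: permutes_not_in)
          qed
        qed
      qed
    qed
    show "(\<lambda>(p1, p2). p1 \<circ> p2) ` (P1 \<times> P2) \<subseteq> row_group n k"
    proof (rule subsetI)
      fix y assume "y \<in> (\<lambda>(p1, p2). p1 \<circ> p2) ` (P1 \<times> P2)"
      then obtain p1 p2 where y: "y = p1 \<circ> p2" and p: "p1 \<in> P1" "p2 \<in> P2" by auto
      have p1: "p1 permutes {1..n}" using p permutes_subset un by (auto simp: P1_def)
      have p2: "p2 permutes {1..n}" using p permutes_subset un by (auto simp: P2_def)
      have pp1: "p1 permutes R1" and pp2: "p2 permutes R2" using p by (auto simp: P1_def P2_def)
      have a1: "p2 ` R1 = R1" by (rule permutes_fix_image[OF pp2 disj])
      have a2: "p1 ` R2 = R2" by (rule permutes_fix_image[OF pp1]) (use disj in blast)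
      have "(p1 \<circ> p2) ` R1 = R1" using a1 permutes_image[OF pp1] by (metis image_comp)
      moreover have "(p1 \<circ> p2) ` R2 = R2" using a2 permutes_image[OF pp2] by (metis image_comp)
      ultimately show "y \<in> row_group n k" using permutes_compose[OF p2 p1] R y by auto
    qed
    show "(\<lambda>p. (\<lambda>x. if x \<in> R1 then p x else x, \<lambda>x. if x \<in> R2 then p x else x)) ` row_group n k \<subseteq> P1 \<times> P2"
    proof (rule subsetI)
      fix y assume "y \<in> (\<lambda>p. (\<lambda>x. if x \<in> R1 then p x else x, \<lambda>x. if x \<in> R2 then p x else x)) ` row_group n k"
      then obtain p where y: "y = (\<lambda>x. if x \<in> R1 then p x else x, \<lambda>x. if x \<in> R2 then p x else x)"
         and "p \<in> row_group n k" by blast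
      hence p: "p permutes {1..n}" "p ` R1 = R1" "p ` R2 = R2" using R by auto
      have "(\<lambda>x. if x \<in> R1 then p x else x) \<in> P1" unfolding P1_def
        using restrict_permutes[OF p(1) p(2)] un by auto
      moreover have "(\<lambda>x. if x \<in> R2 then p x else x) \<in> P2" unfolding P2_def
        using restrict_permutes[OF p(1) p(3)] un by auto
      ultimately show "y \<in> P1 \<times> P2" unfolding y by blast
    qed
  qed
  define O1 where "O1 = {n-m+1..n-k}"
  have Om: "{n-m+1..n} = O1 \<union> R2" using km mn by (auto simp: O1_def R2_def)
  have O1R2: "O1 \<inter> R2 = {}" by (auto simp: O1_def R2_def)
  have "(\<Sum>p\<in>row_group n k. F (p ` {n-m+1..n})) = (\<Sum>(p1,p2)\<in>P1 \<times> P2. F ((p1 \<circ> p2) ` {n-m+1..n}))"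
    using sum.reindex_bij_betw[OF bij, of "\<lambda>p. F (p ` {n-m+1..n})"] by (simp add: case_prod_unfold)
  also have "\<dots> = (\<Sum>p1\<in>P1. \<Sum>p2\<in>P2. F ((p1 \<circ> p2) ` {n-m+1..n}))"
    by (rule sum.cartesian_product[symmetric])
  also have "\<dots> = (\<Sum>p1\<in>P1. \<Sum>p2\<in>P2. F (p1 ` O1 \<union> R2))"
  proof (intro sum.cong refl)
    fix p1 p2 assume p: "p1 \<in> P1" "p2 \<in> P2"
    have "p2 ` {n-m+1..n} = O1 \<union> R2" using p O1R2 unfolding Om
      by (simp add: image_Un P2_def permutes_image permutes_fix_image)
    moreover have "p1 ` R2 = R2" using p disj by (simp add: P1_def permutes_fix_image Int_commute)
    ultimately have "(p1 \<circ> p2) ` {n-m+1..n} = p1 ` O1 \<union> R2"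
      by (metis image_Un image_comp)
    thus "F ((p1 \<circ> p2) ` {n-m+1..n}) = F (p1 ` O1 \<union> R2)" by simp
  qed
  also have "\<dots> = (\<Sum>p1\<in>P1. of_nat (fact k) * F (p1 ` O1 \<union> R2))"
  proof (intro sum.cong refl)
    fix p1
    have "card P2 = fact (card R2)" unfolding P2_def by (rule card_permutations) (auto simp: R2_def)
    moreover have "card R2 = k" using km mn by (simp add: R2_def)
    ultimately show "(\<Sum>p2\<in>P2. F (p1 ` O1 \<union> R2)) = of_nat (fact k) * F (p1 ` O1 \<union> R2)" by simp
  qed
  finally show ?thesis by (simp add: sum_distrib_left P1_def R1_def O1_def R2_def)
qed

lemma arith_part:
  fixes b :: "nat \<Rightarrow> complex"
  assumes "v \<le> k" "k \<le> m"
  shows "of_nat (k choose v) * ((-1)^v * (of_nat (fact k * (fact (m-k) * fact (n-m))) *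
     (\<Sum>i=0..m-k. of_nat (((m-k+v) choose i) * ((n-m-v) choose (m-k-i))) * b (i + (k - v))))) =
   (\<Sum>w=0..m-k. (-1)^v * of_nat (k choose v) * of_nat ((m-k) choose w)
       * of_nat ((n-m-v) choose w) * of_nat (fact w) * of_nat ((m-k+v) choose (m-k-w))
       * of_nat (fact (m-k-w)) * of_nat (fact k) * of_nat (fact (n-m)) * b (m-v-w))"
proof -
  have "(\<Sum>i=0..m-k. of_nat (((m-k+v) choose i) * ((n-m-v) choose (m-k-i))) * b (i + (k - v))) =
     (\<Sum>w=0..m-k. of_nat (((m-k+v) choose (m-k-w)) * ((n-m-v) choose (m-k-(m-k-w)))) * b (m-k-w + (k - v)) :: complex)"
    by (subst sum.atLeastAtMost_rev) simp
  also have "\<dots> = (\<Sum>w=0..m-k. of_nat (((m-k+v) choose (m-k-w)) * ((n-m-v) choose w)) * b (m-v-w))"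
  proof (rule sum.cong[OF refl])
    fix w assume "w \<in> {0..m-k}"
    hence w: "w \<le> m - k" by simp
    have "m-k-(m-k-w) = w" using w by simp
    moreover have "m-k-w + (k - v) = m-v-w" using w assms by simp
    ultimately show "of_nat (((m-k+v) choose (m-k-w)) * ((n-m-v) choose (m-k-(m-k-w)))) * b (m-k-w + (k - v)) =
      (of_nat (((m-k+v) choose (m-k-w)) * ((n-m-v) choose w)) * b (m-v-w) :: complex)" by simp
  qed
  finally have e1: "(\<Sum>i=0..m-k. of_nat (((m-k+v) choose i) * ((n-m-v) choose (m-k-i))) * b (i + (k - v))) =
     (\<Sum>w=0..m-k. of_nat (((m-k+v) choose (m-k-w)) * ((n-m-v) choose w)) * b (m-v-w))" .
  show ?thesis unfolding e1 sum_distrib_left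
  proof (rule sum.cong[OF refl])
    fix w assume "w \<in> {0..m-k}"
    hence w: "w \<le> m - k" by simp
    have f: "fact (m-k) = (fact w * fact (m-k-w) * ((m-k) choose w) :: nat)"
      using binomial_fact_lemma[OF w] by simp
    show "of_nat (k choose v) * ((-1)^v * (of_nat (fact k * (fact (m-k) * fact (n-m))) *
        (of_nat (((m-k+v) choose (m-k-w)) * ((n-m-v) choose w)) * b (m-v-w)))) =
      (-1)^v * of_nat (k choose v) * of_nat ((m-k) choose w)
       * of_nat ((n-m-v) choose w) * of_nat (fact w) * of_nat ((m-k+v) choose (m-k-w))
       * of_nat (fact (m-k-w)) * of_nat (fact k) * of_nat (fact (n-m)) * (b (m-v-w) :: complex)"
      unfolding f by (simp add: ac_simps)
  qed
qed

lemma top_part: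
  fixes x :: "(nat \<Rightarrow> nat) \<Rightarrow> complex"
  assumes "m \<le> n"
  shows "B_apply n m b (pi_map n m x) (Omega n m) =
    (\<Sum>g\<in>Sn n. x g * b (card (Omega n m \<inter> g ` Omega n m)))"
proof -
  have fS: "finite (Sn n)" unfolding Sn_def by (rule finite_permutations) simp
  have fM: "finite (msubsets n m)" unfolding msubsets_def by (rule finite_subset[of _ "Pow {1..n}"]) auto
  have img: "(\<lambda>g. g ` Omega n m) ` Sn n \<subseteq> msubsets n m"
  proof
    fix t assume "t \<in> (\<lambda>g. g ` Omega n m) ` Sn n"
    then obtain g where g: "g permutes {1..n}" "t = g ` Omega n m" by (auto simp: Sn_def)
    have sub: "Omega n m \<subseteq> {1..n}" by (auto simp: Omega_def)
    have "t \<subseteq> {1..n}" using g sub permutes_image[OF g(1)] by auto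
    moreover have "card t = card (Omega n m)" using g permutes_inj[OF g(1)]
      by (metis card_image inj_on_subset subset_UNIV)
    moreover have "card (Omega n m) = m" using assms by (simp add: Omega_def)
    ultimately show "t \<in> msubsets n m" by (simp add: msubsets_def)
  qed
  have "B_apply n m b (pi_map n m x) (Omega n m) =
     (\<Sum>t\<in>msubsets n m. \<Sum>g\<in>{g \<in> Sn n. g ` Omega n m = t}. x g * b (card (Omega n m \<inter> g ` Omega n m)))"
    unfolding B_apply_def pi_map_def sum_distrib_left
    by (intro sum.cong refl) (auto simp: ac_simps)
  also have "\<dots> = (\<Sum>g\<in>Sn n. x g * b (card (Omega n m \<inter> g ` Omega n m)))"
    by (rule sum.group[OF fS fM img])
  finally show ?thesis .
qed

lemma young_part:
  fixes H :: "(nat \<Rightarrow> nat) \<Rightarrow> complex"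
  shows "(\<Sum>g\<in>Sn n. young_c n k g * H g) =
    (\<Sum>q\<in>col_group n k. \<Sum>p\<in>row_group n k. of_int (sign q) * H (q \<circ> p))"
proof -
  have fS: "finite (Sn n)" unfolding Sn_def by (rule finite_permutations) simp
  have cl: "a \<circ> c \<in> Sn n" if "a \<in> Sn n" "c \<in> Sn n" for a c
    using that permutes_compose by (auto simp: Sn_def)
  define X where "X = (\<lambda>q. if q \<in> col_group n k then of_int (sign q) else (0::complex))"
  define Y where "Y = (\<lambda>p. if p \<in> row_group n k then 1 else (0::complex))"
  have "(\<Sum>g\<in>Sn n. young_c n k g * H g) =
      (\<Sum>g\<in>Sn n. \<Sum>a\<in>Sn n. \<Sum>c\<in>Sn n. if a \<circ> c = g then X a * Y c * H g else 0)"
    unfolding young_c_def gr_mult_def X_def Y_def sum_distrib_right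
    by (intro sum.cong refl) auto
  also have "\<dots> = (\<Sum>a\<in>Sn n. \<Sum>c\<in>Sn n. \<Sum>g\<in>Sn n. if a \<circ> c = g then X a * Y c * H g else 0)"
    by (subst sum.swap) (subst (2) sum.swap, rule refl)
  also have "\<dots> = (\<Sum>a\<in>Sn n. \<Sum>c\<in>Sn n. X a * (Y c * H (a \<circ> c)))"
  proof (intro sum.cong refl)
    fix a c assume ac: "a \<in> Sn n" "c \<in> Sn n"
    have "(\<Sum>g\<in>Sn n. if a \<circ> c = g then X a * Y c * H g else 0) = (if a \<circ> c \<in> Sn n then X a * Y c * H (a \<circ> c) else 0)"
      by (rule sum.delta'[OF fS])
    thus "(\<Sum>g\<in>Sn n. if a \<circ> c = g then X a * Y c * H g else 0) = X a * (Y c * H (a \<circ> c))"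
      using cl[OF ac] by (simp add: ac_simps)
  qed
  also have "\<dots> = (\<Sum>a\<in>Sn n. X a * (\<Sum>c\<in>Sn n. Y c * H (a \<circ> c)))"
    by (simp add: sum_distrib_left)
  also have "\<dots> = (\<Sum>a\<in>col_group n k. of_int (sign a) * (\<Sum>c\<in>row_group n k. H (a \<circ> c)))"
  proof -
    have r: "(\<Sum>c\<in>Sn n. Y c * H (a \<circ> c)) = (\<Sum>c\<in>row_group n k. H (a \<circ> c))" for a
    proof -
      have "(\<Sum>c\<in>Sn n. Y c * H (a \<circ> c)) = (\<Sum>c\<in>Sn n \<inter> row_group n k. H (a \<circ> c))"
        unfolding Y_def sum.inter_restrict[OF fS] by (intro sum.cong) auto
      also have "Sn n \<inter> row_group n k = row_group n k" by (auto simp: row_group_def)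
      finally show ?thesis .
    qed
    have "(\<Sum>a\<in>Sn n. X a * (\<Sum>c\<in>Sn n. Y c * H (a \<circ> c))) =
       (\<Sum>a\<in>Sn n \<inter> col_group n k. of_int (sign a) * (\<Sum>c\<in>row_group n k. H (a \<circ> c)))"
      unfolding X_def r sum.inter_restrict[OF fS] by (intro sum.cong) auto
    also have "Sn n \<inter> col_group n k = col_group n k" by (auto simp: col_group_def)
    finally show ?thesis .
  qed
  finally show ?thesis by (simp add: sum_distrib_left)
qed

lemma per_S:
  fixes b :: "nat \<Rightarrow> complex"
  assumes S: "S \<subseteq> {1..k}" and km: "k \<le> m" and mn: "2 * m \<le> n"
  shows "(\<Sum>p\<in>row_group n k. b (card ({n-m+1..n} \<inter> (qS (n-k) S \<circ> p) ` {n-m+1..n}))) =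
    of_nat (fact k * (fact (m-k) * fact (n-m))) *
     (\<Sum>i=0..m-k. of_nat (((m-k+card S) choose i) * ((n-m-card S) choose (m-k-i))) * b (i + (k - card S)))"
proof -
  define q where "q = qS (n-k) S"
  define Om where "Om = {n-m+1..n}"
  define R1 where "R1 = {1..n-k}"
  define R2 where "R2 = {n-k+1..n}"
  define O1 where "O1 = {n-m+1..n-k}"
  define XS where "XS = O1 \<union> S"
  define T where "T = (\<lambda>j. j + (n - k)) ` S"
  have Sb: "\<And>x. x \<in> S \<Longrightarrow> 1 \<le> x \<and> x \<le> k" using S by auto
  have kn: "2 * k \<le> n" using km mn by simp
  have qp: "q permutes {1..n}" using qS_props[OF S kn] by (simp add: q_def)
  have inj: "inj q" using permutes_inj[OF qp] .
  have qq: "q ` (q ` Y) = Y" for Y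
  proof -
    have "q ` (q ` Y) = (\<lambda>x. q (q x)) ` Y" by (simp add: image_comp)
    also have "\<dots> = Y" using qS_invol[OF S, of "n-k"] kn by (simp add: q_def)
    finally show ?thesis .
  qed
  have swap: "card (Om \<inter> q ` Y) = card (q ` Om \<inter> Y)" for Y
  proof -
    have "q ` (Om \<inter> q ` Y) = q ` Om \<inter> Y" using image_Int[OF inj] qq by metis
    moreover have "card (q ` (Om \<inter> q ` Y)) = card (Om \<inter> q ` Y)"
      using inj by (metis card_image inj_on_subset subset_UNIV)
    ultimately show ?thesis by simp
  qed
  have qOm: "q ` Om = XS \<union> (R2 - T)"
    using qS_Omega[OF S km mn] by (auto simp: q_def Om_def XS_def O1_def R2_def T_def)
  have fR1: "finite R1" by (simp add: R1_def)
  have O1R1: "O1 \<subseteq> R1" by (auto simp: O1_def R1_def)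
  have XR1: "XS \<subseteq> R1" using Sb km mn by (force simp: XS_def O1_def R1_def)
  have TR2: "T \<subseteq> R2" using Sb km mn by (force simp: T_def R2_def)
  have cT: "card T = card S" unfolding T_def by (rule card_image) (simp add: inj_on_def)
  have fS: "finite S" using S finite_subset by blast
  have cR2: "card (R2 - T) = k - card S"
  proof -
    have "card (R2 - T) = card R2 - card T" by (rule card_Diff_subset) (use TR2 finite_subset in \<open>auto simp: R2_def\<close>)
    thus ?thesis using cT km mn by (simp add: R2_def)
  qed
  have cO1: "card O1 = m - k" using km mn by (simp add: O1_def)
  have cXS: "card XS = m - k + card S"
  proof -
    have "O1 \<inter> S = {}" using Sb km mn by (force simp: O1_def)
    thus ?thesis using card_Un_disjoint[of O1 S] fS cO1 by (simp add: XS_def O1_def)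
  qed
  have key: "card (q ` Om \<inter> (A \<union> R2)) = card (A \<inter> XS) + (k - card S)" if A: "A \<subseteq> R1" for A
  proof -
    have "q ` Om \<inter> (A \<union> R2) = (A \<inter> XS) \<union> (R2 - T)"
      using qOm XR1 A by (auto simp: R1_def R2_def)
    moreover have "(A \<inter> XS) \<inter> (R2 - T) = {}" using A by (auto simp: R1_def R2_def)
    moreover have "finite (A \<inter> XS)" "finite (R2 - T)" using A fR1 finite_subset by (auto simp: R2_def)
    ultimately show ?thesis using cR2 card_Un_disjoint by metis
  qed
  have "(\<Sum>p\<in>row_group n k. b (card (Om \<inter> (q \<circ> p) ` Om))) =
        (\<Sum>p\<in>row_group n k. b (card (q ` Om \<inter> p ` Om)))"
  proof (intro sum.cong refl)
    fix p
    have "(q \<circ> p) ` Om = q ` (p ` Om)" by (rule image_comp[symmetric])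
    thus "b (card (Om \<inter> (q \<circ> p) ` Om)) = b (card (q ` Om \<inter> p ` Om))" using swap by metis
  qed
  also have "\<dots> = of_nat (fact k) * (\<Sum>p1\<in>{p. p permutes R1}. b (card (q ` Om \<inter> (p1 ` O1 \<union> R2))))"
    unfolding Om_def R1_def O1_def R2_def
    by (rule row_sum[OF km]) (use mn in simp)
  also have "(\<Sum>p1\<in>{p. p permutes R1}. b (card (q ` Om \<inter> (p1 ` O1 \<union> R2)))) =
     of_nat (fact (card O1) * fact (card R1 - card O1)) *
       (\<Sum>A\<in>{A. A \<subseteq> R1 \<and> card A = card O1}. b (card (q ` Om \<inter> (A \<union> R2))))"
    by (rule sum_perm_image[OF fR1 O1R1, of "\<lambda>A. b (card (q ` Om \<inter> (A \<union> R2)))"])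
  also have "(\<Sum>A\<in>{A. A \<subseteq> R1 \<and> card A = card O1}. b (card (q ` Om \<inter> (A \<union> R2)))) =
      (\<Sum>A\<in>{A. A \<subseteq> R1 \<and> card A = m - k}. b (card (A \<inter> XS) + (k - card S)))"
    unfolding cO1 by (intro sum.cong refl) (simp add: key)
  also have "\<dots> = (\<Sum>i=0..m-k. of_nat ((card XS choose i) * ((card R1 - card XS) choose (m - k - i))) * b (i + (k - card S)))"
    by (rule sum_subsets_inter[OF fR1 XR1])
  finally show ?thesis
    using cXS cO1 km mn by (simp add: q_def Om_def R1_def mult.assoc)
qed

theorem lemma6:
  fixes n m k :: nat and b :: "nat \<Rightarrow> complex"
  assumes "0 < n" and "m \<le> n div 2" and "k \<le> m"
  shows "B_apply n m b (pi_map n m (young_c n k)) (Omega n m) =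
    (\<Sum>v=0..k. \<Sum>w=0..m-k. (-1)^v * of_nat (k choose v) * of_nat ((m-k) choose w)
       * of_nat ((n-m-v) choose w) * of_nat (fact w) * of_nat ((m-k+v) choose (m-k-w))
       * of_nat (fact (m-k-w)) * of_nat (fact k) * of_nat (fact (n-m)) * b (m-v-w))"
proof -
  have mn: "2 * m \<le> n" using assms(2) by simp
  have km: "k \<le> m" by (rule assms(3))
  have kn: "2 * k \<le> n" using mn km by simp
  define Om where "Om = {n-m+1..n}"
  define Phi where "Phi v = (of_nat (fact k * (fact (m-k) * fact (n-m))) *
     (\<Sum>i=0..m-k. of_nat (((m-k+v) choose i) * ((n-m-v) choose (m-k-i))) * b (i + (k - v))) :: complex)" for v
  have "B_apply n m b (pi_map n m (young_c n k)) (Omega n m) =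
      (\<Sum>g\<in>Sn n. young_c n k g * b (card (Om \<inter> g ` Om)))"
    using top_part[of m n b "young_c n k"] mn by (simp add: Omega_def Om_def)
  also have "\<dots> = (\<Sum>q\<in>col_group n k. \<Sum>p\<in>row_group n k. of_int (sign q) * b (card (Om \<inter> (q \<circ> p) ` Om)))"
    by (rule young_part)
  also have "\<dots> = (\<Sum>q\<in>col_group n k. of_int (sign q) * (\<Sum>p\<in>row_group n k. b (card (Om \<inter> (q \<circ> p) ` Om))))"
    by (simp add: sum_distrib_left)
  also have "\<dots> = (\<Sum>S\<in>Pow {1..k}. of_int (sign (qS (n-k) S)) * (\<Sum>p\<in>row_group n k. b (card (Om \<inter> (qS (n-k) S \<circ> p) ` Om))))"
    by (rule sum.reindex_bij_betw[OF col_group_bij[OF kn], symmetric])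
  also have "\<dots> = (\<Sum>S\<in>Pow {1..k}. (-1) ^ card S * Phi (card S))"
  proof (rule sum.cong[OF refl])
    fix S assume "S \<in> Pow {1..k}"
    hence S: "S \<subseteq> {1..k}" by simp
    have "sign (qS (n-k) S) = (-1) ^ card S" using qS_props[OF S kn] by simp
    thus "of_int (sign (qS (n-k) S)) * (\<Sum>p\<in>row_group n k. b (card (Om \<inter> (qS (n-k) S \<circ> p) ` Om))) =
        (-1) ^ card S * Phi (card S)"
      using per_S[OF S km mn, of b] by (simp add: Om_def Phi_def)
  qed
  also have "\<dots> = (\<Sum>v=0..k. of_nat (k choose v) * ((-1) ^ v * Phi v))"
    using sum_pow_card[of "{1..k}" "\<lambda>v. (-1) ^ v * Phi v"] by simp
  also have "\<dots> = (\<Sum>v=0..k. \<Sum>w=0..m-k. (-1)^v * of_nat (k choose v) * of_nat ((m-k) choose w)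
       * of_nat ((n-m-v) choose w) * of_nat (fact w) * of_nat ((m-k+v) choose (m-k-w))
       * of_nat (fact (m-k-w)) * of_nat (fact k) * of_nat (fact (n-m)) * b (m-v-w))"
  proof (rule sum.cong[OF refl])
    fix v assume "v \<in> {0..k}"
    hence v: "v \<le> k" by simp
    show "of_nat (k choose v) * ((-1) ^ v * Phi v) = (\<Sum>w=0..m-k. (-1)^v * of_nat (k choose v) * of_nat ((m-k) choose w)
       * of_nat ((n-m-v) choose w) * of_nat (fact w) * of_nat ((m-k+v) choose (m-k-w))
       * of_nat (fact (m-k-w)) * of_nat (fact k) * of_nat (fact (n-m)) * b (m-v-w))"
      unfolding Phi_def by (rule arith_part[OF v km])
  qed
  finally show ?thesis .
qed

end
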